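(* Let $\mathcal{Q}\subseteq 2^E$ ($E$ finite) be Rayleigh (respectively weakly Rayleigh). Then there are matroids $\mathcal{M}$ and $\mathcal{N}$ on $E$ such that $\mathcal{Q}=\mathbf{I}\mathcal{M}\cap\mathbf{S}\mathcal{N}$, where $\mathbf{I}\mathcal{M}$ is the set of independent sets of $\mathcal{M}$ and $\mathbf{S}\mathcal{N}$ the set of spanning sets of $\mathcal{N}$. Moreover, the sets of bases $\mathbf{B}\mathcal{M}$ and $\mathbf{B}\mathcal{N}$ are both Rayleigh (respectively weakly Rayleigh).
   Context: For $\omega:2^E\to[0,\infty)$ not identically zero, $Z(\omega;\mathbf{y})=\sum_S\omega(S)\prod_{e\in S}y_e$; with subscripts denoting partial derivatives, $Z$ is Rayleigh if $Z_eZ_f-Z_{ef}Z\ge0$ for all distinct $e,f$ and all positive $\mathbf{y}$. A set-system $\mathcal{Q}$ is Rayleigh if $Z(\mathcal{Q};\mathbf{y})=\sum_{S\in\mathcal{Q}}\prod_{e\in S}y_e$ is Rayleigh, and weakly Rayleigh if some $\omega\ge0$ with $\{S:\omega(S)>0\}=\mathcal{Q}$ has $Z(\omega;\mathbf{y})$ Rayleigh. *)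

theory Defs
  imports "HOL-Analysis.Analysis"
begin

definition matroid :: "'a set \<Rightarrow> 'a set set \<Rightarrow> bool" where
  "matroid E I \<longleftrightarrow> finite E \<and> I \<subseteq> Pow E \<and> {} \<in> I \<and>
     (\<forall>A\<in>I. \<forall>B. B \<subseteq> A \<longrightarrow> B \<in> I) \<and>
     (\<forall>A\<in>I. \<forall>B\<in>I. card A < card B \<longrightarrow> (\<exists>x\<in>B - A. insert x A \<in> I))"

definition bases :: "'a set set \<Rightarrow> 'a set set" where
  "bases I = {B \<in> I. \<forall>A\<in>I. B \<subseteq> A \<longrightarrow> A = B}"

definition spanning :: "'a set \<Rightarrow> 'a set set \<Rightarrow> 'a set set" where
  "spanning E I = {S. S \<subseteq> E \<and> (\<exists>B\<in>bases I. B \<subseteq> S)}"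

definition Zpoly :: "'a set \<Rightarrow> ('a set \<Rightarrow> real) \<Rightarrow> ('a \<Rightarrow> real) \<Rightarrow> real" where
  "Zpoly E \<omega> y = (\<Sum>S\<in>Pow E. \<omega> S * (\<Prod>e\<in>S. y e))"

definition pd :: "'a \<Rightarrow> (('a \<Rightarrow> real) \<Rightarrow> real) \<Rightarrow> ('a \<Rightarrow> real) \<Rightarrow> real" where
  "pd e F y = deriv (\<lambda>t. F (y(e := t))) (y e)"

definition rayleigh_weight :: "'a set \<Rightarrow> ('a set \<Rightarrow> real) \<Rightarrow> bool" where
  "rayleigh_weight E \<omega> \<longleftrightarrow>
     (\<forall>S. S \<subseteq> E \<longrightarrow> \<omega> S \<ge> 0) \<and> (\<exists>S. S \<subseteq> E \<and> \<omega> S \<noteq> 0) \<and>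
     (\<forall>e\<in>E. \<forall>f\<in>E. e \<noteq> f \<longrightarrow> (\<forall>y. (\<forall>x\<in>E. y x > 0) \<longrightarrow>
        pd e (Zpoly E \<omega>) y * pd f (Zpoly E \<omega>) y
          - pd e (pd f (Zpoly E \<omega>)) y * Zpoly E \<omega> y \<ge> 0))"

definition rayleigh :: "'a set \<Rightarrow> 'a set set \<Rightarrow> bool" where
  "rayleigh E Q \<longleftrightarrow> Q \<subseteq> Pow E \<and> rayleigh_weight E (\<lambda>S. if S \<in> Q then 1 else 0)"

definition weakly_rayleigh :: "'a set \<Rightarrow> 'a set set \<Rightarrow> bool" where
  "weakly_rayleigh E Q \<longleftrightarrow> Q \<subseteq> Pow E \<and>
     (\<exists>\<omega>. {S. S \<subseteq> E \<and> \<omega> S > 0} = Q \<and> rayleigh_weight E \<omega>)"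

end

theory Submission
  imports Defs
begin


lemma lead_nonneg:
  fixes c k :: "'i \<Rightarrow> real"
  assumes fin: "finite I" and bnd: "\<And>i. i\<in>I \<Longrightarrow> c i \<noteq> 0 \<Longrightarrow> k i \<le> M"
    and pos: "\<And>t. t > 0 \<Longrightarrow> 0 \<le> (\<Sum>i\<in>I. c i * t powr k i)"
  shows "0 \<le> (\<Sum>i\<in>I. if k i = M then c i else 0)"
proof -
  have trm: "((\<lambda>t. c i * t powr (k i - M)) \<longlongrightarrow> (if k i = M then c i else 0)) at_top"
    if i: "i \<in> I" for i
  proof (cases "c i = 0")
    case True then show ?thesis by simp
  next
    case False
    with bnd i have le: "k i \<le> M" by auto
    show ?thesis
    proof (cases "k i = M")
      case True
      have "eventually (\<lambda>t. c i = c i * t powr (k i - M)) at_top"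
        using eventually_gt_at_top[of 0] by eventually_elim (simp add: True)
      then show ?thesis using True by (simp add: tendsto_eventually)
    next
      case False
      with le have "k i - M < 0" by simp
      then have "((\<lambda>t. t powr (k i - M)) \<longlongrightarrow> 0) at_top"
        by (intro tendsto_neg_powr filterlim_ident)
      then have "((\<lambda>t. c i * t powr (k i - M)) \<longlongrightarrow> c i * 0) at_top"
        by (intro tendsto_mult tendsto_const)
      then show ?thesis using False by simp
    qed
  qed
  have lim: "((\<lambda>t. \<Sum>i\<in>I. c i * t powr (k i - M)) \<longlongrightarrow> (\<Sum>i\<in>I. if k i = M then c i else 0)) at_top"
    by (intro tendsto_sum trm)
  have ev: "eventually (\<lambda>t. 0 \<le> (\<Sum>i\<in>I. c i * t powr (k i - M))) at_top"
    using eventually_gt_at_top[of 0]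
  proof eventually_elim
    case (elim t)
    have "(\<Sum>i\<in>I. c i * t powr (k i - M)) = (\<Sum>i\<in>I. c i * t powr k i) / t powr M"
      by (simp add: powr_diff sum_divide_distrib)
    also have "\<dots> \<ge> 0" using pos[OF elim] by simp
    finally show ?case .
  qed
  show ?thesis by (rule tendsto_lowerbound[OF lim ev]) simp
qed

definition ws :: "('a \<Rightarrow> real) \<Rightarrow> 'a set \<Rightarrow> real" where
  "ws w U = (\<Sum>x\<in>U. w x)"

definition rr :: "'a \<Rightarrow> ('a set \<Rightarrow> real) \<Rightarrow> 'a set \<Rightarrow> real" where
  "rr e \<omega> U = (if e \<in> U then 0 else \<omega> U)"

definition dd :: "'a \<Rightarrow> ('a set \<Rightarrow> real) \<Rightarrow> 'a set \<Rightarrow> real" where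
  "dd e \<omega> U = (if e \<in> U then 0 else \<omega> (insert e U))"

lemma Zpoly_split_gen:
  assumes "finite E" "e \<in> E"
  shows "Zpoly E \<phi> y = (\<Sum>U\<in>Pow (E - {e}). \<phi> U * (\<Prod>x\<in>U. y x))
     + (\<Sum>U\<in>Pow (E - {e}). \<phi> (insert e U) * (\<Prod>x\<in>insert e U. y x))"
proof -
  have E: "E = insert e (E - {e})" using assms by auto
  have P: "Pow E = Pow (E - {e}) \<union> insert e ` Pow (E - {e})"
    by (subst E, rule Pow_insert)
  have disj: "Pow (E - {e}) \<inter> insert e ` Pow (E - {e}) = {}" by auto
  have inj: "inj_on (insert e) (Pow (E - {e}))"
    by (rule inj_onI) (metis Diff_insert_absorb PowD insert_Diff_single subset_Diff_insert)
  have fin: "finite (Pow (E - {e}))" using assms by simp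
  show ?thesis
    unfolding Zpoly_def P
    by (subst sum.union_disjoint[OF fin _ disj]) (use fin in \<open>auto simp: sum.reindex[OF inj]\<close>)
qed

lemma Zpoly_split:
  assumes "finite E" "e \<in> E"
  shows "Zpoly E \<omega> y = Zpoly E (rr e \<omega>) y + y e * Zpoly E (dd e \<omega>) y"
proof -
  have fU: "finite U" if "U \<in> Pow (E - {e})" for U using that assms finite_subset by auto
  have p: "(\<Prod>x\<in>insert e U. y x) = y e * (\<Prod>x\<in>U. y x)" if "U \<in> Pow (E - {e})" for U
    using that fU[OF that] by (subst prod.insert) auto
  have a: "(\<Sum>U\<in>Pow (E - {e}). rr e \<omega> U * (\<Prod>x\<in>U. y x)) = (\<Sum>U\<in>Pow (E - {e}). \<omega> U * (\<Prod>x\<in>U. y x))"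
    by (rule sum.cong) (auto simp: rr_def)
  have b: "(\<Sum>U\<in>Pow (E - {e}). rr e \<omega> (insert e U) * (\<Prod>x\<in>insert e U. y x)) = 0"
    by (rule sum.neutral) (auto simp: rr_def)
  have c: "(\<Sum>U\<in>Pow (E - {e}). dd e \<omega> U * (\<Prod>x\<in>U. y x)) = (\<Sum>U\<in>Pow (E - {e}). \<omega> (insert e U) * (\<Prod>x\<in>U. y x))"
    by (rule sum.cong) (auto simp: dd_def)
  have d: "(\<Sum>U\<in>Pow (E - {e}). dd e \<omega> (insert e U) * (\<Prod>x\<in>insert e U. y x)) = 0"
    by (rule sum.neutral) (auto simp: dd_def)
  have f: "(\<Sum>U\<in>Pow (E - {e}). \<omega> (insert e U) * (\<Prod>x\<in>insert e U. y x)) = y e * (\<Sum>U\<in>Pow (E - {e}). \<omega> (insert e U) * (\<Prod>x\<in>U. y x))"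
    unfolding sum_distrib_left by (rule sum.cong) (auto simp: p)
  show ?thesis
    unfolding Zpoly_split_gen[OF assms, of \<omega>] Zpoly_split_gen[OF assms, of "rr e \<omega>"]
      Zpoly_split_gen[OF assms, of "dd e \<omega>"] a b c d f by simp
qed

lemma Zpoly_indep:
  assumes "\<And>U. e \<in> U \<Longrightarrow> \<phi> U = 0"
  shows "Zpoly E \<phi> (y(e := t)) = Zpoly E \<phi> y"
  unfolding Zpoly_def
proof (rule sum.cong[OF refl])
  fix U assume "U \<in> Pow E"
  show "\<phi> U * (\<Prod>x\<in>U. (y(e := t)) x) = \<phi> U * (\<Prod>x\<in>U. y x)"
  proof (cases "e \<in> U")
    case True then show ?thesis using assms by simp
  next
    case False
    then have "(\<Prod>x\<in>U. (y(e := t)) x) = (\<Prod>x\<in>U. y x)" by (intro prod.cong) auto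
    then show ?thesis by simp
  qed
qed

lemma pd_Zpoly:
  assumes "finite E" "e \<in> E"
  shows "pd e (Zpoly E \<omega>) y = Zpoly E (dd e \<omega>) y"
proof -
  have eq: "(\<lambda>t. Zpoly E \<omega> (y(e := t))) = (\<lambda>t. Zpoly E (rr e \<omega>) y + t * Zpoly E (dd e \<omega>) y)"
  proof
    fix t
    show "Zpoly E \<omega> (y(e := t)) = Zpoly E (rr e \<omega>) y + t * Zpoly E (dd e \<omega>) y"
      by (subst Zpoly_split[OF assms]) (simp add: Zpoly_indep rr_def dd_def)
  qed
  have "((\<lambda>t. Zpoly E (rr e \<omega>) y + t * Zpoly E (dd e \<omega>) y) has_field_derivative Zpoly E (dd e \<omega>) y) (at (y e))"
    by (auto intro!: derivative_eq_intros)
  then show ?thesis unfolding pd_def eq by (rule DERIV_imp_deriv)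
qed

lemma pd_Zpoly_fun:
  assumes "finite E" "e \<in> E"
  shows "pd e (Zpoly E \<omega>) = Zpoly E (dd e \<omega>)"
  using pd_Zpoly[OF assms] by blast

lemma dd_comm: "e \<noteq> f \<Longrightarrow> dd f (dd e \<omega>) = dd e (dd f \<omega>)"
  by (rule ext) (auto simp: dd_def insert_commute)

lemma dd_rr_comm: "e \<noteq> f \<Longrightarrow> dd f (rr e \<omega>) = rr e (dd f \<omega>)"
  by (rule ext) (auto simp: dd_def rr_def)

lemma ray_char:
  assumes "finite E" "e \<in> E" "f \<in> E" "e \<noteq> f"
  shows "pd e (Zpoly E \<omega>) y * pd f (Zpoly E \<omega>) y - pd e (pd f (Zpoly E \<omega>)) y * Zpoly E \<omega> y
    = Zpoly E (rr f (dd e \<omega>)) y * Zpoly E (rr e (dd f \<omega>)) y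
      - Zpoly E (rr f (rr e \<omega>)) y * Zpoly E (dd e (dd f \<omega>)) y"
proof -
  have 1: "pd e (Zpoly E \<omega>) y = Zpoly E (rr f (dd e \<omega>)) y + y f * Zpoly E (dd e (dd f \<omega>)) y"
    using pd_Zpoly[OF assms(1,2)] Zpoly_split[OF assms(1,3), of "dd e \<omega>"] dd_comm[OF assms(4)]
    by simp
  have 2: "pd f (Zpoly E \<omega>) y = Zpoly E (rr e (dd f \<omega>)) y + y e * Zpoly E (dd e (dd f \<omega>)) y"
    using pd_Zpoly[OF assms(1,3)] Zpoly_split[OF assms(1,2), of "dd f \<omega>"] by simp
  have 3: "pd e (pd f (Zpoly E \<omega>)) y = Zpoly E (dd e (dd f \<omega>)) y"
    using pd_Zpoly_fun[OF assms(1,3)] pd_Zpoly[OF assms(1,2)] by simp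
  have 4: "Zpoly E \<omega> y = Zpoly E (rr f (rr e \<omega>)) y + y f * Zpoly E (rr e (dd f \<omega>)) y
      + y e * (Zpoly E (rr f (dd e \<omega>)) y + y f * Zpoly E (dd e (dd f \<omega>)) y)"
    using Zpoly_split[OF assms(1,2), of \<omega>] Zpoly_split[OF assms(1,3), of "rr e \<omega>"]
      Zpoly_split[OF assms(1,3), of "dd e \<omega>"] dd_comm[OF assms(4)] dd_rr_comm[OF assms(4)]
    by simp
  show ?thesis unfolding 1 2 3 4 by (simp add: algebra_simps)
qed

lemma Zpoly_prod:
  "Zpoly E a y * Zpoly E b y = (\<Sum>(U,V)\<in>Pow E \<times> Pow E. a U * b V * ((\<Prod>x\<in>U. y x) * (\<Prod>x\<in>V. y x)))"
  unfolding Zpoly_def sum_product sum.cartesian_product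
  by (rule sum.cong) (auto simp: algebra_simps)

lemma init_ineq:
  assumes fin: "finite E"
    and H: "\<And>y. (\<forall>x\<in>E. y x > 0) \<Longrightarrow> Zpoly E \<alpha> y * Zpoly E \<delta> y \<le> Zpoly E \<beta> y * Zpoly E \<gamma> y"
    and B1: "\<And>U V. U \<subseteq> E \<Longrightarrow> V \<subseteq> E \<Longrightarrow> \<alpha> U * \<delta> V \<noteq> 0 \<Longrightarrow> ws w U + ws w V \<le> M"
    and B2: "\<And>U V. U \<subseteq> E \<Longrightarrow> V \<subseteq> E \<Longrightarrow> \<beta> U * \<gamma> V \<noteq> 0 \<Longrightarrow> ws w U + ws w V \<le> M"
    and y: "\<forall>x\<in>E. y x > 0"
  shows "(\<Sum>(U,V)\<in>Pow E \<times> Pow E. if ws w U + ws w V = M then \<alpha> U * \<delta> V * ((\<Prod>x\<in>U. y x) * (\<Prod>x\<in>V. y x)) else 0)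
       \<le> (\<Sum>(U,V)\<in>Pow E \<times> Pow E. if ws w U + ws w V = M then \<beta> U * \<gamma> V * ((\<Prod>x\<in>U. y x) * (\<Prod>x\<in>V. y x)) else 0)"
proof -
  define I where "I = Pow E \<times> Pow E"
  define c where "c = (\<lambda>(U,V). (\<beta> U * \<gamma> V - \<alpha> U * \<delta> V) * ((\<Prod>x\<in>U. y x) * (\<Prod>x\<in>V. y x)))"
  define k where "k = (\<lambda>(U::'a set,V::'a set). ws w U + ws w V)"
  have finI: "finite I" using fin by (simp add: I_def)
  have bnd: "k i \<le> M" if "i \<in> I" "c i \<noteq> 0" for i
  proof -
    obtain U V where i: "i = (U,V)" by force
    from that have "\<alpha> U * \<delta> V \<noteq> 0 \<or> \<beta> U * \<gamma> V \<noteq> 0" by (auto simp: c_def i)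
    then show ?thesis using B1 B2 that(1) by (auto simp: k_def i I_def)
  qed
  have pos: "0 \<le> (\<Sum>i\<in>I. c i * t powr k i)" if t: "t > 0" for t
  proof -
    define yt where "yt = (\<lambda>x. t powr w x * y x)"
    have ytp: "\<forall>x\<in>E. yt x > 0" using y t by (simp add: yt_def)
    have pr: "(\<Prod>x\<in>U. yt x) = t powr ws w U * (\<Prod>x\<in>U. y x)" for U
      using t by (simp add: yt_def prod.distrib ws_def powr_sum)
    have "(\<Sum>i\<in>I. c i * t powr k i) = Zpoly E \<beta> yt * Zpoly E \<gamma> yt - Zpoly E \<alpha> yt * Zpoly E \<delta> yt"
      unfolding Zpoly_prod sum_subtractf[symmetric] I_def
      by (rule sum.cong) (auto simp: c_def k_def pr powr_add algebra_simps)
    also have "\<dots> \<ge> 0" using H[OF ytp] by simp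
    finally show ?thesis .
  qed
  have "0 \<le> (\<Sum>i\<in>I. if k i = M then c i else 0)"
    by (rule lead_nonneg[OF finI bnd pos]) auto
  also have "(\<Sum>i\<in>I. if k i = M then c i else 0) =
     (\<Sum>(U,V)\<in>Pow E \<times> Pow E. if ws w U + ws w V = M then \<beta> U * \<gamma> V * ((\<Prod>x\<in>U. y x) * (\<Prod>x\<in>V. y x)) else 0)
   - (\<Sum>(U,V)\<in>Pow E \<times> Pow E. if ws w U + ws w V = M then \<alpha> U * \<delta> V * ((\<Prod>x\<in>U. y x) * (\<Prod>x\<in>V. y x)) else 0)"
    unfolding sum_subtractf[symmetric] I_def
    by (rule sum.cong) (auto simp: c_def k_def algebra_simps)
  finally show ?thesis by simp
qed

lemma ws_insert: "finite U \<Longrightarrow> e \<notin> U \<Longrightarrow> ws w (insert e U) = w e + ws w U"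
  by (simp add: ws_def)

lemma rw_ray:
  assumes "rayleigh_weight E \<omega>" "finite E" "e \<in> E" "f \<in> E" "e \<noteq> f" "\<forall>x\<in>E. y x > 0"
  shows "Zpoly E (rr f (rr e \<omega>)) y * Zpoly E (dd e (dd f \<omega>)) y
       \<le> Zpoly E (rr f (dd e \<omega>)) y * Zpoly E (rr e (dd f \<omega>)) y"
  using assms ray_char[OF assms(2-5), of \<omega> y] unfolding rayleigh_weight_def by force

lemma rw_intro:
  assumes "finite E" "\<And>S. S \<subseteq> E \<Longrightarrow> \<omega> S \<ge> 0" "S0 \<subseteq> E" "\<omega> S0 \<noteq> 0"
    and "\<And>e f y. e \<in> E \<Longrightarrow> f \<in> E \<Longrightarrow> e \<noteq> f \<Longrightarrow> \<forall>x\<in>E. y x > 0 \<Longrightarrow>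
       Zpoly E (rr f (rr e \<omega>)) y * Zpoly E (dd e (dd f \<omega>)) y
       \<le> Zpoly E (rr f (dd e \<omega>)) y * Zpoly E (rr e (dd f \<omega>)) y"
  shows "rayleigh_weight E \<omega>"
  unfolding rayleigh_weight_def
proof (intro conjI allI impI ballI)
  fix e f and y :: "'a \<Rightarrow> real" assume "e \<in> E" "f \<in> E" "e \<noteq> f" "\<forall>x\<in>E. 0 < y x"
  then show "0 \<le> pd e (Zpoly E \<omega>) y * pd f (Zpoly E \<omega>) y - pd e (pd f (Zpoly E \<omega>)) y * Zpoly E \<omega> y"
    using ray_char[OF assms(1), of e f \<omega> y] assms(5)[of e f y] by simp
qed (use assms in auto)

definition tq :: "'a set set \<Rightarrow> bool" where
  "tq Q \<longleftrightarrow> (\<forall>w e f S T. e \<noteq> f \<longrightarrow> S \<in> Q \<longrightarrow> T \<in> Q \<longrightarrow> e \<notin> S \<longrightarrow> f \<notin> S \<longrightarrow> e \<in> T \<longrightarrow> f \<in> T \<longrightarrow>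
     (\<exists>U1\<in>Q. \<exists>U2\<in>Q. e \<in> U1 \<and> f \<notin> U1 \<and> f \<in> U2 \<and> e \<notin> U2 \<and> ws w S + ws w T \<le> ws w U1 + ws w U2))"

lemma tropq:
  assumes rw: "rayleigh_weight E \<omega>" and fin: "finite E"
  shows "tq {S. S \<subseteq> E \<and> \<omega> S > 0}"
  unfolding tq_def
proof (intro allI impI)
  let ?Q = "{S. S \<subseteq> E \<and> \<omega> S > 0}"
  fix w e f S T
  assume ef: "e \<noteq> f" and S: "S \<in> ?Q" and T: "T \<in> ?Q" and eS: "e \<notin> S" and fS: "f \<notin> S"
    and eT: "e \<in> T" and fT: "f \<in> T"
  have nn: "\<And>S. S \<subseteq> E \<Longrightarrow> \<omega> S \<ge> 0" using rw by (auto simp: rayleigh_weight_def)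
  have eE: "e \<in> E" and fE: "f \<in> E" using T eT fT by auto
  show "\<exists>U1\<in>?Q. \<exists>U2\<in>?Q. e \<in> U1 \<and> f \<notin> U1 \<and> f \<in> U2 \<and> e \<notin> U2 \<and> ws w S + ws w T \<le> ws w U1 + ws w U2"
  proof (rule ccontr)
    assume C: "\<not> ?thesis"
    define \<alpha> where "\<alpha> = rr f (rr e \<omega>)"
    define \<beta> where "\<beta> = rr f (dd e \<omega>)"
    define \<gamma> where "\<gamma> = rr e (dd f \<omega>)"
    define \<delta> where "\<delta> = dd e (dd f \<omega>)"
    define T' where "T' = T - {e, f}"
    have finT: "finite T" using T fin finite_subset by auto
    have T'eq: "insert f (insert e T') = T" using eT fT by (auto simp: T'_def)
    have wsT: "ws w T = w e + w f + ws w T'"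
    proof -
      have "ws w T = ws w (insert f (insert e T'))" by (simp add: T'eq)
      also have "\<dots> = w f + (w e + ws w T')" using finT ef
        by (simp add: ws_insert T'_def)
      finally show ?thesis by simp
    qed
    define K where "K = (\<lambda>(U,V). ws w U + ws w V) ` {p \<in> Pow E \<times> Pow E. \<alpha> (fst p) * \<delta> (snd p) \<noteq> 0}"
    have finK: "finite K" using fin by (simp add: K_def)
    have aS: "\<alpha> S = \<omega> S" using eS fS by (simp add: \<alpha>_def rr_def)
    have dT0: "\<delta> T' = \<omega> (insert f (insert e T'))" using ef by (simp add: \<delta>_def dd_def T'_def insert_commute)
    have dT: "\<delta> T' = \<omega> T" unfolding dT0 T'eq ..
    have inK: "ws w S + ws w T' \<in> K"
      unfolding K_def using S T aS dT by (intro image_eqI[of _ _ "(S, T')"]) (auto simp: T'_def)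
    define M where "M = Max K"
    have B1: "ws w U + ws w V \<le> M" if "U \<subseteq> E" "V \<subseteq> E" "\<alpha> U * \<delta> V \<noteq> 0" for U V
      unfolding M_def using that finK by (intro Max_ge) (auto simp: K_def intro!: image_eqI[of _ _ "(U,V)"])
    have B2s: "ws w U + ws w V < ws w S + ws w T'" if "U \<subseteq> E" "V \<subseteq> E" "\<beta> U * \<gamma> V \<noteq> 0" for U V
    proof -
      from that have b0: "\<beta> U \<noteq> 0" and g0: "\<gamma> V \<noteq> 0" by auto
      from b0 have u: "e \<notin> U" "f \<notin> U" "\<omega> (insert e U) \<noteq> 0"
        unfolding \<beta>_def rr_def dd_def by (auto split: if_splits)
      from g0 have v: "e \<notin> V" "f \<notin> V" "\<omega> (insert f V) \<noteq> 0"
        unfolding \<gamma>_def rr_def dd_def by (auto split: if_splits)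
      have U1: "insert e U \<in> ?Q" using u that eE nn[of "insert e U"] by auto
      have U2: "insert f V \<in> ?Q" using v that fE nn[of "insert f V"] by auto
      have "\<not> (ws w S + ws w T \<le> ws w (insert e U) + ws w (insert f V))"
        using C U1 U2 u v ef by blast
      moreover have "finite U" "finite V" using that fin finite_subset by auto
      ultimately show ?thesis using u v by (simp add: ws_insert wsT)
    qed
    have B2: "ws w U + ws w V \<le> M" if "U \<subseteq> E" "V \<subseteq> E" "\<beta> U * \<gamma> V \<noteq> 0" for U V
      using B2s[OF that] Max_ge[OF finK inK] by (simp add: M_def)
    have H: "Zpoly E \<alpha> y * Zpoly E \<delta> y \<le> Zpoly E \<beta> y * Zpoly E \<gamma> y" if "\<forall>x\<in>E. y x > 0" for y
      using rw_ray[OF rw fin eE fE ef that] by (simp add: \<alpha>_def \<beta>_def \<gamma>_def \<delta>_def)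
    have I: "(\<Sum>(U,V)\<in>Pow E \<times> Pow E. if ws w U + ws w V = M then \<alpha> U * \<delta> V * ((\<Prod>x\<in>U. 1) * (\<Prod>x\<in>V. 1)) else 0)
       \<le> (\<Sum>(U,V)\<in>Pow E \<times> Pow E. if ws w U + ws w V = M then \<beta> U * \<gamma> V * ((\<Prod>x\<in>U. 1) * (\<Prod>x\<in>V. 1)) else 0)"
      by (rule init_ineq[OF fin H B1 B2, of "\<lambda>_. 1"]) auto
    have R0: "(\<Sum>(U,V)\<in>Pow E \<times> Pow E. if ws w U + ws w V = M then \<beta> U * \<gamma> V * ((\<Prod>x\<in>U. 1) * (\<Prod>x\<in>V. 1)) else 0) = 0"
    proof -
      have z: "(if ws w U + ws w V = M then \<beta> U * \<gamma> V * ((\<Prod>x\<in>U. 1) * (\<Prod>x\<in>V. 1)) else 0) = (0::real)"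
        if "U \<subseteq> E" "V \<subseteq> E" for U V
      proof -
        have "\<beta> U * \<gamma> V = 0 \<or> ws w U + ws w V \<noteq> M"
          using B2s[OF that] Max_ge[OF finK inK] unfolding M_def by fastforce
        then show ?thesis by auto
      qed
      show ?thesis by (rule sum.neutral) (use z in auto)
    qed
    have "M \<in> K" unfolding M_def using finK inK by (intro Max_in) auto
    then obtain U0 V0 where UV0: "U0 \<subseteq> E" "V0 \<subseteq> E" "\<alpha> U0 * \<delta> V0 \<noteq> 0" "ws w U0 + ws w V0 = M"
      by (auto simp: K_def)
    have anng: "\<alpha> U \<ge> 0" if "U \<subseteq> E" for U using nn[OF that] by (simp add: \<alpha>_def rr_def)
    have dnng: "\<delta> V \<ge> 0" if "V \<subseteq> E" for V using nn[of "insert f (insert e V)"] that eE fE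
      by (simp add: \<delta>_def dd_def)
    have "0 < (if ws w U0 + ws w V0 = M then \<alpha> U0 * \<delta> V0 * ((\<Prod>x\<in>U0. 1) * (\<Prod>x\<in>V0. (1::real))) else 0)"
      using UV0 anng[OF UV0(1)] dnng[OF UV0(2)]
      by (simp add: less_le)
    also have "\<dots> \<le> (\<Sum>(U,V)\<in>Pow E \<times> Pow E. if ws w U + ws w V = M then \<alpha> U * \<delta> V * ((\<Prod>x\<in>U. 1) * (\<Prod>x\<in>V. 1)) else 0)"
      using member_le_sum[of "(U0,V0)" "Pow E \<times> Pow E" "\<lambda>(U,V). if ws w U + ws w V = M then \<alpha> U * \<delta> V * ((\<Prod>x\<in>U. 1) * (\<Prod>x\<in>V. (1::real))) else 0"]
        UV0 fin anng dnng by (auto intro: mult_nonneg_nonneg)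
    finally show False using I R0 by simp
  qed
qed



lemma mask:
  fixes a b z p q m1 m2 M :: real
  assumes "a \<noteq> 0 \<Longrightarrow> p \<le> m1" "b \<noteq> 0 \<Longrightarrow> q \<le> m2" "M = m1 + m2"
  shows "(if p + q = M then a * b * z else 0) = (if p = m1 then a else 0) * (if q = m2 then b else 0) * z"
  using assms by (cases "a = 0"; cases "b = 0") auto

lemma initial_rw:
  assumes rw: "rayleigh_weight E \<omega>" and fin: "finite E"
    and bm: "\<And>U. U \<subseteq> E \<Longrightarrow> \<omega> U \<noteq> 0 \<Longrightarrow> ws w U \<le> m"
    and att: "U0 \<subseteq> E" "\<omega> U0 \<noteq> 0" "ws w U0 = m"
  shows "rayleigh_weight E (\<lambda>U. if ws w U = m then \<omega> U else 0)"
proof -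
  define \<omega>' where "\<omega>' = (\<lambda>U. if ws w U = m then \<omega> U else 0)"
  have nn: "\<And>S. S \<subseteq> E \<Longrightarrow> \<omega> S \<ge> 0" using rw by (auto simp: rayleigh_weight_def)
  have "rayleigh_weight E \<omega>'"
  proof (rule rw_intro[OF fin _ att(1)])
    show "\<And>S. S \<subseteq> E \<Longrightarrow> 0 \<le> \<omega>' S" using nn by (simp add: \<omega>'_def)
    show "\<omega>' U0 \<noteq> 0" using att by (simp add: \<omega>'_def)
  next
    fix e f and y :: "'a \<Rightarrow> real"
    assume eE: "e \<in> E" and fE: "f \<in> E" and ef: "e \<noteq> f" and y: "\<forall>x\<in>E. 0 < y x"
    define \<alpha> where "\<alpha> = rr f (rr e \<omega>)"
    define \<beta> where "\<beta> = rr f (dd e \<omega>)"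
    define \<gamma> where "\<gamma> = rr e (dd f \<omega>)"
    define \<delta> where "\<delta> = dd e (dd f \<omega>)"
    define M where "M = m + (m - w e - w f)"
    have finU: "finite U" if "U \<subseteq> E" for U using that fin finite_subset by auto
    have ba: "ws w U \<le> m" if "U \<subseteq> E" "\<alpha> U \<noteq> 0" for U
      using that bm[of U] by (auto simp: \<alpha>_def rr_def split: if_splits)
    have bb: "ws w U \<le> m - w e" if "U \<subseteq> E" "\<beta> U \<noteq> 0" for U
    proof -
      from that(2) have u: "e \<notin> U" "f \<notin> U" "\<omega> (insert e U) \<noteq> 0"
        unfolding \<beta>_def rr_def dd_def by (auto split: if_splits)
      then have "ws w (insert e U) \<le> m" using bm[of "insert e U"] that eE by auto
      then show ?thesis using u finU[OF that(1)] by (simp add: ws_insert)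
    qed
    have bc: "ws w U \<le> m - w f" if "U \<subseteq> E" "\<gamma> U \<noteq> 0" for U
    proof -
      from that(2) have u: "e \<notin> U" "f \<notin> U" "\<omega> (insert f U) \<noteq> 0"
        unfolding \<gamma>_def rr_def dd_def by (auto split: if_splits)
      then have "ws w (insert f U) \<le> m" using bm[of "insert f U"] that fE by auto
      then show ?thesis using u finU[OF that(1)] by (simp add: ws_insert)
    qed
    have bd: "ws w U \<le> m - w e - w f" if "U \<subseteq> E" "\<delta> U \<noteq> 0" for U
    proof -
      from that(2) have u: "e \<notin> U" "f \<notin> U" "\<omega> (insert f (insert e U)) \<noteq> 0"
        unfolding \<delta>_def rr_def dd_def by (auto split: if_splits)
      then have "ws w (insert f (insert e U)) \<le> m" using bm[of "insert f (insert e U)"] that eE fE by auto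
      then show ?thesis using u ef finU[OF that(1)] by (simp add: ws_insert)
    qed
    have H: "Zpoly E \<alpha> y * Zpoly E \<delta> y \<le> Zpoly E \<beta> y * Zpoly E \<gamma> y" if "\<forall>x\<in>E. y x > 0" for y
      using rw_ray[OF rw fin eE fE ef that] by (simp add: \<alpha>_def \<beta>_def \<gamma>_def \<delta>_def)
    have B1: "ws w U + ws w V \<le> M" if "U \<subseteq> E" "V \<subseteq> E" "\<alpha> U * \<delta> V \<noteq> 0" for U V
      using ba[of U] bd[of V] that by (auto simp: M_def)
    have B2: "ws w U + ws w V \<le> M" if "U \<subseteq> E" "V \<subseteq> E" "\<beta> U * \<gamma> V \<noteq> 0" for U V
      using bb[of U] bc[of V] that by (auto simp: M_def)
    note I = init_ineq[OF fin H B1 B2 y]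
    have a': "rr f (rr e \<omega>') U = (if ws w U = m then \<alpha> U else 0)" for U
      by (simp add: \<omega>'_def \<alpha>_def rr_def)
    have b': "rr f (dd e \<omega>') U = (if ws w U = m - w e then \<beta> U else 0)" if "U \<subseteq> E" for U
      using finU[OF that] by (auto simp: \<omega>'_def \<beta>_def rr_def dd_def ws_insert)
    have c': "rr e (dd f \<omega>') U = (if ws w U = m - w f then \<gamma> U else 0)" if "U \<subseteq> E" for U
      using finU[OF that] by (auto simp: \<omega>'_def \<gamma>_def rr_def dd_def ws_insert)
    have d': "dd e (dd f \<omega>') U = (if ws w U = m - w e - w f then \<delta> U else 0)" if "U \<subseteq> E" for U
      using finU[OF that] ef by (auto simp: \<omega>'_def \<delta>_def rr_def dd_def ws_insert)
    have L: "Zpoly E (rr f (rr e \<omega>')) y * Zpoly E (dd e (dd f \<omega>')) y =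
      (\<Sum>(U,V)\<in>Pow E \<times> Pow E. if ws w U + ws w V = M then \<alpha> U * \<delta> V * ((\<Prod>x\<in>U. y x) * (\<Prod>x\<in>V. y x)) else 0)"
      unfolding Zpoly_prod
    proof (rule sum.cong[OF refl], clarify)
      fix U V assume "U \<subseteq> E" "V \<subseteq> E"
      then show "rr f (rr e \<omega>') U * dd e (dd f \<omega>') V * ((\<Prod>x\<in>U. y x) * (\<Prod>x\<in>V. y x)) =
        (if ws w U + ws w V = M then \<alpha> U * \<delta> V * ((\<Prod>x\<in>U. y x) * (\<Prod>x\<in>V. y x)) else 0)"
        using a'[of U] d'[of V] mask[of "\<alpha> U" "ws w U" m "\<delta> V" "ws w V" "m - w e - w f" M]
          ba[of U] bd[of V] by (simp add: M_def)
    qed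
    have R: "Zpoly E (rr f (dd e \<omega>')) y * Zpoly E (rr e (dd f \<omega>')) y =
      (\<Sum>(U,V)\<in>Pow E \<times> Pow E. if ws w U + ws w V = M then \<beta> U * \<gamma> V * ((\<Prod>x\<in>U. y x) * (\<Prod>x\<in>V. y x)) else 0)"
      unfolding Zpoly_prod
    proof (rule sum.cong[OF refl], clarify)
      fix U V assume "U \<subseteq> E" "V \<subseteq> E"
      then show "rr f (dd e \<omega>') U * rr e (dd f \<omega>') V * ((\<Prod>x\<in>U. y x) * (\<Prod>x\<in>V. y x)) =
        (if ws w U + ws w V = M then \<beta> U * \<gamma> V * ((\<Prod>x\<in>U. y x) * (\<Prod>x\<in>V. y x)) else 0)"
        using b'[of U] c'[of V] mask[of "\<beta> U" "ws w U" "m - w e" "\<gamma> V" "ws w V" "m - w f" M]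
          bb[of U] bc[of V] by (simp add: M_def)
    qed
    show "Zpoly E (rr f (rr e \<omega>')) y * Zpoly E (dd e (dd f \<omega>')) y
       \<le> Zpoly E (rr f (dd e \<omega>')) y * Zpoly E (rr e (dd f \<omega>')) y"
      unfolding L R by (rule I)
  qed
  then show ?thesis by (simp add: \<omega>'_def)
qed



lemma obtain_max:
  fixes f :: "'b \<Rightarrow> nat"
  assumes "finite A" "a \<in> A"
  shows "\<exists>x\<in>A. \<forall>y\<in>A. f y \<le> f x"
proof -
  have "Max (f ` A) \<in> f ` A" using assms by (intro Max_in) auto
  then obtain x where x: "x \<in> A" "f x = Max (f ` A)" by auto
  have "\<forall>y\<in>A. f y \<le> f x" using assms x by (auto intro: Max_ge)
  then show ?thesis using x by blast
qed

lemma finQ_lem: "U \<in> Q \<Longrightarrow> Q \<subseteq> Pow E \<Longrightarrow> finite E \<Longrightarrow> finite U"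
  by (meson PowD finite_subset subsetD)

definition w4 :: "real \<Rightarrow> real \<Rightarrow> real \<Rightarrow> real \<Rightarrow> 'a set \<Rightarrow> 'a set \<Rightarrow> 'a \<Rightarrow> real" where
  "w4 a b c d S T x = (if x \<in> S \<and> x \<in> T then a else if x \<in> S then b else if x \<in> T then c else d)"

lemma ws_w4:
  assumes "finite U"
  shows "ws (w4 a b c d S T) U = a * card (U \<inter> S \<inter> T) + b * card (U \<inter> (S - T)) + c * card (U \<inter> (T - S)) + d * card (U - (S \<union> T))"
proof -
  have "w4 a b c d S T x = a * of_bool (x \<in> S \<inter> T) + b * of_bool (x \<in> S - T) + c * of_bool (x \<in> T - S) + d * of_bool (x \<notin> S \<union> T)" for x
    by (simp add: w4_def)
  then have "ws (w4 a b c d S T) U = (\<Sum>x\<in>U. a * of_bool (x \<in> S \<inter> T) + b * of_bool (x \<in> S - T) + c * of_bool (x \<in> T - S) + d * of_bool (x \<notin> S \<union> T))"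
    unfolding ws_def by simp
  also have "\<dots> = a * card (U \<inter> {x. x \<in> S \<inter> T}) + b * card (U \<inter> {x. x \<in> S - T}) + c * card (U \<inter> {x. x \<in> T - S}) + d * card (U \<inter> {x. x \<notin> S \<union> T})"
    using assms by (simp add: sum.distrib sum_distrib_left[symmetric])
  also have "U \<inter> {x. x \<in> S \<inter> T} = U \<inter> S \<inter> T" by auto
  also have "U \<inter> {x. x \<in> S - T} = U \<inter> (S - T)" by auto
  also have "U \<inter> {x. x \<in> T - S} = U \<inter> (T - S)" by auto
  also have "U \<inter> {x. x \<notin> S \<union> T} = U - (S \<union> T)" by auto
  finally show ?thesis .
qed

lemma card4:
  assumes "finite U"
  shows "real (card U) = card (U \<inter> S \<inter> T) + card (U \<inter> (S - T)) + card (U \<inter> (T - S)) + card (U - (S \<union> T))"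
proof -
  have "w4 1 1 1 1 S T = (\<lambda>_. 1)" by (auto simp: w4_def)
  then have "ws (w4 1 1 1 1 S T) U = card U" by (simp add: ws_def)
  then show ?thesis using ws_w4[OF assms, of 1 1 1 1 S T] by simp
qed

lemma P_lemma:
  assumes tq: "tq Q" and QE: "Q \<subseteq> Pow E" and fin: "finite E"
    and S: "S \<in> Q" and T: "T \<in> Q" and ef: "e \<noteq> f" "e \<in> T" "f \<in> T" "e \<notin> S" "f \<notin> S"
  shows "\<exists>U\<in>Q. S \<inter> T \<subseteq> U \<and> U \<subseteq> S \<union> T \<and> e \<in> U \<and> f \<notin> U"
proof -
  define w where "w = w4 1 0 0 (-1) S T"
  obtain U1 U2 where U: "U1 \<in> Q" "U2 \<in> Q" "e \<in> U1" "f \<notin> U1" and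
    ineq: "ws w S + ws w T \<le> ws w U1 + ws w U2"
    using tq S T ef unfolding tq_def by blast
  have finQ: "finite U" if "U \<in> Q" for U using finQ_lem[OF that QE fin] .
  have wsU: "ws w U = real (card (U \<inter> S \<inter> T)) - card (U - (S \<union> T))" if "U \<in> Q" for U
    using ws_w4[OF finQ[OF that]] by (simp add: w_def)
  have le: "card (U \<inter> S \<inter> T) \<le> card (S \<inter> T)" if "U \<in> Q" for U
    using finQ[OF S] by (intro card_mono) auto
  have wS: "ws w S = card (S \<inter> T)" proof -
    have q: "S \<inter> S \<inter> T = S \<inter> T" "S - (S \<union> T) = {}" by auto
    show ?thesis using wsU[OF S] unfolding q by simp
  qed
  have wT: "ws w T = card (S \<inter> T)" proof -
    have q: "T \<inter> S \<inter> T = S \<inter> T" "T - (S \<union> T) = {}" by auto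
    show ?thesis using wsU[OF T] unfolding q by simp
  qed
  have "ws w U2 \<le> card (S \<inter> T)" using wsU[OF U(2)] le[OF U(2)] by simp
  then have "ws w U1 \<ge> card (S \<inter> T)" using ineq wS wT by simp
  then have c1: "card (U1 \<inter> S \<inter> T) = card (S \<inter> T)" and c2: "card (U1 - (S \<union> T)) = 0"
    using wsU[OF U(1)] le[OF U(1)] by simp_all
  have "U1 \<inter> S \<inter> T = S \<inter> T" using c1 finQ[OF S] by (intro card_subset_eq) auto
  moreover have "U1 - (S \<union> T) = {}" using c2 finQ[OF U(1)] by simp
  ultimately show ?thesis using U by blast
qed

lemma conv1:
  assumes tq: "tq Q" and QE: "Q \<subseteq> Pow E" and fin: "finite E" and S: "S \<in> Q"
  shows "T \<in> Q \<Longrightarrow> S \<subseteq> T \<Longrightarrow> e \<in> T \<Longrightarrow> e \<notin> S \<Longrightarrow> insert e S \<in> Q"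
proof (induction "card (T - S)" arbitrary: T rule: less_induct)
  case less
  have finT: "finite T" using finQ_lem[OF less.prems(1) QE fin] .
  show ?case
  proof (cases "T - S = {e}")
    case True
    then have "T = insert e S" using less.prems by auto
    then show ?thesis using less.prems by simp
  next
    case False
    then obtain f where f: "f \<in> T" "f \<notin> S" "f \<noteq> e" using less.prems by auto
    obtain U where U: "U \<in> Q" "S \<inter> T \<subseteq> U" "U \<subseteq> S \<union> T" "e \<in> U" "f \<notin> U"
      using P_lemma[OF tq QE fin S less.prems(1) f(3)[symmetric] less.prems(3) f(1) less.prems(4) f(2)] by blast
    have "U - S \<subseteq> T - S" using U(3) by blast
    moreover have "f \<in> T - S" "f \<notin> U - S" using f U(5) by auto
    ultimately have "U - S \<subset> T - S" by blast
    then have "card (U - S) < card (T - S)" using finT by (intro psubset_card_mono) auto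
    moreover have "S \<subseteq> U" using U less.prems by auto
    ultimately show ?thesis using less.hyps[of U] U(1,4) less.prems(4) by blast
  qed
qed

lemma convex:
  assumes tq: "tq Q" and QE: "Q \<subseteq> Pow E" and fin: "finite E" and T: "T \<in> Q"
  shows "S \<in> Q \<Longrightarrow> S \<subseteq> R \<Longrightarrow> R \<subseteq> T \<Longrightarrow> R \<in> Q"
proof (induction "card (R - S)" arbitrary: S rule: less_induct)
  case less
  have finR: "finite R" using finQ_lem[OF T QE fin] less.prems(3) finite_subset by blast
  show ?case
  proof (cases "R = S")
    case True then show ?thesis using less.prems by simp
  next
    case False
    then obtain e where e: "e \<in> R" "e \<notin> S" using less.prems by auto
    have S': "insert e S \<in> Q"
      using conv1[OF tq QE fin less.prems(1) T] less.prems e by auto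
    have "R - insert e S \<subset> R - S" using e by auto
    then have "card (R - insert e S) < card (R - S)" using finR by (intro psubset_card_mono) auto
    then show ?thesis using less.hyps[OF _ S'] less.prems e by auto
  qed
qed


lemma card_split: "finite S \<Longrightarrow> card S = card (S \<inter> T) + card (S - T)"
  by (metis Diff_Diff_Int card_Diff_subset_Int card_mono Int_lower1 add.commute finite_Int
      le_add_diff_inverse2 Int_commute card_Diff_subset inf_le1)

lemma maxcard:
  assumes tq: "tq Q" and QE: "Q \<subseteq> Pow E" and fin: "finite E" and S: "S \<in> Q"
    and mx: "\<And>U. U \<in> Q \<Longrightarrow> S \<subseteq> U \<Longrightarrow> U = S"
  shows "T \<in> Q \<Longrightarrow> card T \<le> card S"
proof (induction "card (T - S)" arbitrary: T rule: less_induct)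
  case less
  note T = less.prems(1)
  show ?case
  proof (rule ccontr)
    assume "\<not> card T \<le> card S"
    hence gt: "card S < card T" by simp
    have finS: "finite S" using finQ_lem[OF S QE fin] .
    have finT: "finite T" using finQ_lem[OF T QE fin] .
    define i where "i = card (S \<inter> T)"
    define m where "m = card (S - T)"
    define n where "n = card (T - S)"
    have cS: "card S = i + m" using card_split[OF finS, of T] by (simp add: i_def m_def)
    have cT: "card T = i + n" using card_split[OF finT, of S] by (simp add: i_def n_def Int_commute)
    have m0: "m \<noteq> 0"
    proof
      assume "m = 0"
      then have "S - T = {}" using finS by (simp add: m_def)
      then have "S \<subseteq> T" by blast
      then have "T = S" using mx[OF T] by simp
      then show False using gt by simp
    qed
    have n2: "n \<ge> 2" using m0 gt cS cT by simp
    obtain e where e: "e \<in> T - S"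
      using n2 unfolding n_def by (metis card.empty equals0I not_numeral_le_zero)
    have "card ((T - S) - {e}) \<ge> 1" using n2 e finT unfolding n_def by (simp add: card_Diff_singleton)
    then obtain f where f: "f \<in> T - S" "f \<noteq> e"
      by (metis Diff_iff card.empty empty_iff insert_iff not_one_le_zero subsetI subset_antisym)
    define K :: real where "K = real m"
    define N :: real where "N = (K + 1) * m + K * n + 1"
    define w where "w = w4 N (K + 1) K (- N) S T"
    obtain U1 U2 where U: "U1 \<in> Q" "U2 \<in> Q" "e \<in> U1" "f \<notin> U1" "f \<in> U2" "e \<notin> U2"
      and ineq: "ws w S + ws w T \<le> ws w U1 + ws w U2"
      using tq S T e f unfolding tq_def by (metis Diff_iff)
    have wsS: "ws w S = N * i + (K + 1) * m"
    proof -
      have q: "S \<inter> S \<inter> T = S \<inter> T" "S \<inter> (S - T) = S - T" "S \<inter> (T - S) = {}" "S - (S \<union> T) = {}" by auto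
      show ?thesis using ws_w4[OF finS, of N "K+1" K "-N" S T] unfolding q w_def i_def m_def by simp
    qed
    have wsT: "ws w T = N * i + K * n"
    proof -
      have q: "T \<inter> S \<inter> T = S \<inter> T" "T \<inter> (S - T) = {}" "T \<inter> (T - S) = T - S" "T - (S \<union> T) = {}" by auto
      show ?thesis using ws_w4[OF finT, of N "K+1" K "-N" S T] unfolding q w_def i_def n_def by simp
    qed
    have Kge: "K \<ge> 0" by (simp add: K_def)
    have bound: "ws w U \<le> N * i + (K + 1) * m - 1"
      if U: "U \<in> Q" and g: "g \<in> T - S" "g \<notin> U" and h: "h \<in> T - S" "h \<in> U" for U g h
    proof -
      have finU: "finite U" using finQ_lem[OF U QE fin] .
      define a where "a = card (U \<inter> S \<inter> T)"
      define q where "q = card (U \<inter> (S - T))"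
      define p where "p = card (U \<inter> (T - S))"
      define ou where "ou = card (U - (S \<union> T))"
      have ws: "ws w U = N * a + (K + 1) * q + K * p - N * ou"
        using ws_w4[OF finU, of N "K+1" K "-N" S T] by (simp add: w_def a_def q_def p_def ou_def)
      have cU: "card U = a + q + p + ou" using card4[OF finU, of S T]
        unfolding a_def q_def p_def ou_def by linarith
      have ai: "a \<le> i" unfolding a_def i_def using finS by (intro card_mono) auto
      have qm: "q \<le> m" unfolding q_def m_def using finS by (intro card_mono) auto
      have pn: "p \<le> n" unfolding p_def n_def using finT by (intro card_mono) auto
      have Npos: "N \<ge> 1" using Kge by (simp add: N_def)
      show ?thesis
      proof (cases "ou = 0 \<and> a = i")
        case True
        then have "U - (S \<union> T) = {}" using finU by (simp add: ou_def)
        then have "U - S \<subseteq> (T - S) - {g}" using g by blast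
        moreover have "(T - S) - {g} \<subset> T - S" using g by blast
        ultimately have "U - S \<subset> T - S" by blast
        then have "card (U - S) < card (T - S)" using finT by (intro psubset_card_mono) auto
        then have "card U \<le> card S" using less.hyps U by blast
        then have qp: "q + p \<le> m" using cU cS True by simp
        have "p \<ge> 1" unfolding p_def using h finU
          by (metis IntI One_nat_def Suc_leI card_gt_0_iff empty_iff finite_Int)
        then have q1: "real q \<le> real m - 1" using qp by simp
        have "K * (real q + real p) \<le> K * real m" using qp Kge by (intro mult_left_mono) auto
        then show ?thesis using ws True q1 by (simp add: algebra_simps)
      next
        case False
        have "N * a - N * ou \<le> N * i - N"
        proof (cases "ou = 0")
          case True
          with False have "a + 1 \<le> i" using ai by simp
          then have "N * (real a + 1) \<le> N * real i" using Npos by (intro mult_left_mono) auto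
          then show ?thesis using True by (simp add: algebra_simps)
        next
          case False
          then have "N * 1 \<le> N * real ou" using Npos by (intro mult_left_mono) auto
          moreover have "N * real a \<le> N * real i" using ai Npos by (intro mult_left_mono) auto
          ultimately show ?thesis by simp
        qed
        moreover have "(K + 1) * q \<le> (K + 1) * m" using qm Kge by (intro mult_left_mono) auto
        moreover have "K * p \<le> K * n" using pn Kge by (intro mult_left_mono) auto
        ultimately have "ws w U \<le> N * i - N + (K + 1) * m + K * n" using ws by simp
        also have "\<dots> = N * i - 1" by (simp add: N_def)
        also have "\<dots> \<le> N * i + (K + 1) * m - 1" using Kge by simp
        finally show ?thesis .
      qed
    qed
    have b1: "ws w U1 \<le> N * i + (K + 1) * m - 1" using bound[OF U(1) f(1) U(4) e U(3)] .
    have b2: "ws w U2 \<le> N * i + (K + 1) * m - 1" using bound[OF U(2) e U(6) f(1) U(5)] .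
    have "real n \<ge> real m + 1" using gt cS cT by simp
    then have "K * n \<ge> K * (m + 1)" using Kge by (intro mult_left_mono) auto
    then show False using ineq wsS wsT b1 b2 by (simp add: K_def algebra_simps)
  qed
qed


lemma ws_diff: "finite E \<Longrightarrow> X \<subseteq> E \<Longrightarrow> ws w (E - X) = ws w E - ws w X"
  unfolding ws_def by (rule sum_diff) auto

lemma ws_neg: "ws (\<lambda>x. - w x) X = - ws w X"
  unfolding ws_def by (simp add: sum_negf)

lemma tq_compl:
  assumes tq: "tq Q" and QE: "Q \<subseteq> Pow E" and fin: "finite E"
  shows "tq ((\<lambda>X. E - X) ` Q)"
  unfolding tq_def
proof (intro allI impI)
  fix w e f S' T'
  assume ef: "e \<noteq> f" and S': "S' \<in> (\<lambda>X. E - X) ` Q" and T': "T' \<in> (\<lambda>X. E - X) ` Q"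
    and eS': "e \<notin> S'" and fS': "f \<notin> S'" and eT': "e \<in> T'" and fT': "f \<in> T'"
  obtain S0 where S0: "S0 \<in> Q" "S' = E - S0" using S' by auto
  obtain T0 where T0: "T0 \<in> Q" "T' = E - T0" using T' by auto
  have eE: "e \<in> E" and fE: "f \<in> E" using eT' fT' T0 by auto
  have m: "e \<notin> T0" "f \<notin> T0" "e \<in> S0" "f \<in> S0" using eT' fT' eS' fS' S0 T0 eE fE by auto
  obtain U1 U2 where U: "U1 \<in> Q" "U2 \<in> Q" "e \<in> U1" "f \<notin> U1" "f \<in> U2" "e \<notin> U2"
    and ineq: "ws (\<lambda>x. - w x) T0 + ws (\<lambda>x. - w x) S0 \<le> ws (\<lambda>x. - w x) U1 + ws (\<lambda>x. - w x) U2"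
    using tq[unfolded tq_def, rule_format, OF ef T0(1) S0(1) m, of "\<lambda>x. - w x"] by blast
  have sub: "X \<subseteq> E" if "X \<in> Q" for X using that QE by auto
  have I: "ws w S' + ws w T' \<le> ws w (E - U2) + ws w (E - U1)"
    using ineq unfolding S0(2) T0(2) ws_neg ws_diff[OF fin sub[OF S0(1)]] ws_diff[OF fin sub[OF T0(1)]]
        ws_diff[OF fin sub[OF U(1)]] ws_diff[OF fin sub[OF U(2)]] by linarith
  have A: "E - U2 \<in> (\<lambda>X. E - X) ` Q" "E - U1 \<in> (\<lambda>X. E - X) ` Q" using U by auto
  have F: "e \<in> E - U2" "f \<notin> E - U2" "f \<in> E - U1" "e \<notin> E - U1" using U eE fE by auto
  show "\<exists>U1\<in>(\<lambda>X. E - X) ` Q. \<exists>U2\<in>(\<lambda>X. E - X) ` Q. e \<in> U1 \<and> f \<notin> U1 \<and> f \<in> U2 \<and> e \<notin> U2 \<and>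
      ws w S' + ws w T' \<le> ws w U1 + ws w U2"
  proof (rule bexI[OF _ A(1)], rule bexI[OF _ A(2)])
    show "e \<in> E - U2 \<and> f \<notin> E - U2 \<and> f \<in> E - U1 \<and> e \<notin> E - U1 \<and> ws w S' + ws w T' \<le> ws w (E - U2) + ws w (E - U1)"
      using F I by simp
  qed
qed

lemma mincard:
  assumes tq: "tq Q" and QE: "Q \<subseteq> Pow E" and fin: "finite E" and S: "S \<in> Q"
    and mn: "\<And>U. U \<in> Q \<Longrightarrow> U \<subseteq> S \<Longrightarrow> U = S" and T: "T \<in> Q"
  shows "card S \<le> card T"
proof -
  let ?Qc = "(\<lambda>X. E - X) ` Q"
  have QcE: "?Qc \<subseteq> Pow E" by auto
  have sub: "X \<subseteq> E" if "X \<in> Q" for X using that QE by auto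
  have mx: "V = E - S" if vV: "V \<in> ?Qc" and vS: "E - S \<subseteq> V" for V
  proof -
    obtain U where U: "U \<in> Q" "V = E - U" using vV by blast
    have "U \<subseteq> S" using vS U sub[OF U(1)] by auto
    then show ?thesis using mn[OF U(1)] U by simp
  qed
  have "card (E - T) \<le> card (E - S)"
    using maxcard[OF tq_compl[OF tq QE fin] QcE fin _ mx] S T by auto
  moreover have "card (E - T) = card E - card T" "card (E - S) = card E - card S"
    using sub[OF T] sub[OF S] fin by (auto intro: card_Diff_subset finite_subset)
  moreover have "card T \<le> card E" "card S \<le> card E" using sub[OF T] sub[OF S] fin by (auto intro: card_mono)
  ultimately show ?thesis by linarith
qed

lemma bx:
  assumes tq: "tq B" and BE: "B \<subseteq> Pow E" and fin: "finite E"
    and eq: "\<And>X Y. X \<in> B \<Longrightarrow> Y \<in> B \<Longrightarrow> card X = card Y" and S: "S \<in> B"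
  shows "T \<in> B \<Longrightarrow> e \<in> S - T \<Longrightarrow> \<exists>g\<in>T - S. insert g (S - {e}) \<in> B"
proof (induction "card (S - T)" arbitrary: T rule: less_induct)
  case less
  note T = less.prems(1)
  have finS: "finite S" using finQ_lem[OF S BE fin] .
  have finT: "finite T" using finQ_lem[OF T BE fin] .
  show ?case
  proof (cases "S - T = {e}")
    case True
    have "card S = card (S \<inter> T) + card (S - T)" "card T = card (T \<inter> S) + card (T - S)"
      using card_split finS finT by auto
    then have "card (T - S) = 1" using True eq[OF S T] by (simp add: Int_commute)
    then obtain g where g: "T - S = {g}" by (auto simp: card_Suc_eq)
    have "insert g (S - {e}) = T" using True g by blast
    then show ?thesis using g T by auto
  next
    case False
    then obtain f where f: "f \<in> S - T" "f \<noteq> e" using less.prems by auto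
    obtain U where U: "U \<in> B" "T \<inter> S \<subseteq> U" "U \<subseteq> T \<union> S" "f \<in> U" "e \<notin> U"
      using P_lemma[OF tq BE fin T S f(2) _ _ _ _, of] f less.prems by auto
    have "S - U \<subseteq> (S - T) - {f}" using U by blast
    moreover have "(S - T) - {f} \<subset> S - T" using f by blast
    ultimately have "S - U \<subset> S - T" by blast
    then have "card (S - U) < card (S - T)" using finS by (intro psubset_card_mono) auto
    moreover have "e \<in> S - U" using U less.prems by auto
    ultimately obtain g where "g \<in> U - S" "insert g (S - {e}) \<in> B" using less.hyps[of U] U(1) by blast
    then show ?thesis using U by blast
  qed
qed


lemma augment:
  assumes BE: "\<B> \<subseteq> Pow E" and fin: "finite E"
    and eq: "\<And>X Y. X \<in> \<B> \<Longrightarrow> Y \<in> \<B> \<Longrightarrow> card X = card Y"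
    and ex: "\<And>S T e. S \<in> \<B> \<Longrightarrow> T \<in> \<B> \<Longrightarrow> e \<in> S - T \<Longrightarrow> \<exists>g\<in>T - S. insert g (S - {e}) \<in> \<B>"
    and A: "A \<subseteq> S0" "S0 \<in> \<B>" and B: "B \<subseteq> T0" "T0 \<in> \<B>" and lt: "card A < card B"
  shows "\<exists>x\<in>B - A. \<exists>C\<in>\<B>. insert x A \<subseteq> C"
proof (rule ccontr)
  assume H: "\<not> ?thesis"
  have finB: "finite X" if "X \<in> \<B>" for X using finQ_lem[OF that BE fin] .
  define P where "P = {(S,T). S \<in> \<B> \<and> T \<in> \<B> \<and> A \<subseteq> S \<and> B \<subseteq> T}"
  have finP: "finite P"
  proof (rule finite_subset)
    show "P \<subseteq> Pow E \<times> Pow E" using BE by (auto simp: P_def)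
  qed (use fin in simp)
  have "(S0, T0) \<in> P" using A B by (simp add: P_def)
  then obtain p where p: "p \<in> P" and pmax: "\<And>p'. p' \<in> P \<Longrightarrow> card (fst p' \<inter> snd p') \<le> card (fst p \<inter> snd p)"
    using obtain_max[OF finP, of _ "\<lambda>p. card (fst p \<inter> snd p)"] by blast
  obtain S T where pST: "p = (S,T)" by force
  have S: "S \<in> \<B>" and T: "T \<in> \<B>" and AS: "A \<subseteq> S" and BT: "B \<subseteq> T" using p pST by (auto simp: P_def)
  have mx: "card (S' \<inter> T') \<le> card (S \<inter> T)" if "S' \<in> \<B>" "T' \<in> \<B>" "A \<subseteq> S'" "B \<subseteq> T'" for S' T'
    using pmax[of "(S',T')"] that pST by (auto simp: P_def)
  have finS: "finite S" and finT: "finite T" using finB S T by auto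
  have c1: "T \<subseteq> B \<union> S"
  proof
    fix x assume xT: "x \<in> T"
    show "x \<in> B \<union> S"
    proof (rule ccontr)
      assume nx: "x \<notin> B \<union> S"
      obtain g where g: "g \<in> S - T" "insert g (T - {x}) \<in> \<B>" using ex[OF T S, of x] xT nx by auto
      have "S \<inter> insert g (T - {x}) = insert g (S \<inter> T)" using g nx by auto
      then have "card (S \<inter> insert g (T - {x})) = card (S \<inter> T) + 1" using g finS by simp
      moreover have "card (S \<inter> insert g (T - {x})) \<le> card (S \<inter> T)"
        using mx[OF S g(2) AS] BT nx by auto
      ultimately show False by simp
    qed
  qed
  have c2: "S \<subseteq> A \<union> T"
  proof
    fix x assume xS: "x \<in> S"
    show "x \<in> A \<union> T"
    proof (rule ccontr)
      assume nx: "x \<notin> A \<union> T"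
      obtain g where g: "g \<in> T - S" "insert g (S - {x}) \<in> \<B>" using ex[OF S T, of x] xS nx by auto
      have "insert g (S - {x}) \<inter> T = insert g (S \<inter> T)" using g nx by auto
      then have "card (insert g (S - {x}) \<inter> T) = card (S \<inter> T) + 1" using g finS by simp
      moreover have "card (insert g (S - {x}) \<inter> T) \<le> card (S \<inter> T)"
        using mx[OF g(2) T _ BT] AS nx by auto
      ultimately show False by simp
    qed
  qed
  have c3: "B \<inter> S \<subseteq> A"
  proof
    fix x assume x: "x \<in> B \<inter> S"
    show "x \<in> A"
    proof (rule ccontr)
      assume "x \<notin> A"
      then have "x \<in> B - A" "insert x A \<subseteq> S" using x AS by auto
      then have "\<exists>x\<in>B - A. \<exists>C\<in>\<B>. insert x A \<subseteq> C" using S by blast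
      then show False using H by contradiction
    qed
  qed
  have finA: "finite A" and finBB: "finite B" using finS finT AS BT finite_subset by auto
  have e1: "T - S = B - S" using c1 BT by blast
  have e2: "S - T \<subseteq> A - B" using c2 BT by blast
  have e3: "B - A \<subseteq> B - S" using c3 by blast
  have "card (S - T) = card (T - S)"
    using card_split[OF finS, of T] card_split[OF finT, of S] eq[OF S T] by (simp add: Int_commute)
  moreover have "card (S - T) \<le> card (A - B)" using e2 finA by (intro card_mono) auto
  moreover have "card (B - A) \<le> card (B - S)" using e3 finBB by (intro card_mono) auto
  moreover have "card (A - B) < card (B - A)"
    using card_split[OF finA, of B] card_split[OF finBB, of A] lt by (simp add: Int_commute)
  ultimately show False using e1 by simp
qed

lemma matroid_of_bases:
  assumes BE: "\<B> \<subseteq> Pow E" and fin: "finite E" and ne: "B0 \<in> \<B>"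
    and eq: "\<And>X Y. X \<in> \<B> \<Longrightarrow> Y \<in> \<B> \<Longrightarrow> card X = card Y"
    and ex: "\<And>S T e. S \<in> \<B> \<Longrightarrow> T \<in> \<B> \<Longrightarrow> e \<in> S - T \<Longrightarrow> \<exists>g\<in>T - S. insert g (S - {e}) \<in> \<B>"
  shows "matroid E {I. \<exists>B\<in>\<B>. I \<subseteq> B}" "bases {I. \<exists>B\<in>\<B>. I \<subseteq> B} = \<B>"
proof -
  let ?M = "{I. \<exists>B\<in>\<B>. I \<subseteq> B}"
  have finB: "finite X" if "X \<in> \<B>" for X using finQ_lem[OF that BE fin] .
  show "matroid E ?M"
    unfolding matroid_def
  proof (intro conjI ballI allI impI)
    show "finite E" by fact
    show "?M \<subseteq> Pow E" using BE by auto
    show "{} \<in> ?M" using ne by auto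
  next
    fix A B assume "A \<in> ?M" "B \<subseteq> A" then show "B \<in> ?M" by auto
  next
    fix A B assume a: "A \<in> ?M" and b: "B \<in> ?M" and lt: "card A < card B"
    from a obtain S0 where "S0 \<in> \<B>" "A \<subseteq> S0" by auto
    moreover from b obtain T0 where "T0 \<in> \<B>" "B \<subseteq> T0" by auto
    ultimately obtain x C where "x \<in> B - A" "C \<in> \<B>" "insert x A \<subseteq> C"
      using augment[OF BE fin eq ex _ _ _ _ lt] by blast
    then show "\<exists>x\<in>B - A. insert x A \<in> ?M" by blast
  qed
  show "bases ?M = \<B>"
  proof
    show "bases ?M \<subseteq> \<B>"
    proof
      fix X assume "X \<in> bases ?M"
      then have X: "X \<in> ?M" and mxX: "\<And>A. A \<in> ?M \<Longrightarrow> X \<subseteq> A \<Longrightarrow> A = X" by (auto simp: bases_def)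
      then obtain B where "B \<in> \<B>" "X \<subseteq> B" by auto
      then show "X \<in> \<B>" using mxX[of B] by auto
    qed
    show "\<B> \<subseteq> bases ?M"
    proof
      fix X assume X: "X \<in> \<B>"
      have "A = X" if aM: "A \<in> ?M" and XA: "X \<subseteq> A" for A
      proof -
        obtain B where B: "B \<in> \<B>" "A \<subseteq> B" using aM by auto
        have "X = B" using card_subset_eq[OF finB[OF B(1)] _ eq[OF X B(1)]] XA B by auto
        then show ?thesis using XA B by auto
      qed
      then show "X \<in> bases ?M" using X by (auto simp: bases_def)
    qed
  qed
qed


lemma obtain_min:
  fixes f :: "'b \<Rightarrow> nat"
  assumes "finite A" "a \<in> A"
  shows "\<exists>x\<in>A. \<forall>y\<in>A. f x \<le> f y"
proof -
  have "Min (f ` A) \<in> f ` A" using assms by (intro Min_in) auto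
  then obtain x where x: "x \<in> A" "f x = Min (f ` A)" by auto
  have "\<forall>y\<in>A. f x \<le> f y" using assms x by (auto intro: Min_le)
  then show ?thesis using x by blast
qed

lemma rw_cong:
  assumes "rayleigh_weight E \<omega>" "\<And>S. S \<subseteq> E \<Longrightarrow> \<omega>' S = \<omega> S"
  shows "rayleigh_weight E \<omega>'"
proof -
  have "Zpoly E \<omega>' = Zpoly E \<omega>" unfolding Zpoly_def using assms(2) by (intro ext sum.cong) auto
  then show ?thesis using assms unfolding rayleigh_weight_def by auto
qed

lemma ws_one: "ws (\<lambda>_. 1) U = real (card U)"
  by (simp add: ws_def)

lemma ws_mone: "ws (\<lambda>_. - 1) U = - real (card U)"
  by (simp add: ws_def)

lemma core:
  assumes fin: "finite E" and rw: "rayleigh_weight E \<omega>"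
  shows "\<exists>M N \<omega>t \<omega>b. matroid E M \<and> matroid E N \<and> {S. S \<subseteq> E \<and> \<omega> S > 0} = M \<inter> spanning E N \<and>
     rayleigh_weight E \<omega>t \<and> rayleigh_weight E \<omega>b \<and>
     {S. S \<subseteq> E \<and> \<omega>t S > 0} = bases M \<and> {S. S \<subseteq> E \<and> \<omega>b S > 0} = bases N \<and>
     (\<forall>S. S \<subseteq> E \<longrightarrow> \<omega>t S = (if S \<in> bases M then \<omega> S else 0)) \<and>
     (\<forall>S. S \<subseteq> E \<longrightarrow> \<omega>b S = (if S \<in> bases N then \<omega> S else 0))"
proof -
  define Q where "Q = {S. S \<subseteq> E \<and> \<omega> S > 0}"
  have nn: "\<And>S. S \<subseteq> E \<Longrightarrow> \<omega> S \<ge> 0" using rw by (auto simp: rayleigh_weight_def)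
  obtain S0 where S0: "S0 \<subseteq> E" "\<omega> S0 \<noteq> 0" using rw by (auto simp: rayleigh_weight_def)
  have S0Q: "S0 \<in> Q" using S0 nn[OF S0(1)] by (auto simp: Q_def)
  have QE: "Q \<subseteq> Pow E" by (auto simp: Q_def)
  have finQ: "finite Q" using QE fin by (meson finite_Pow_iff finite_subset)
  have tqQ: "tq Q" unfolding Q_def by (rule tropq[OF rw fin])
  have inQ: "U \<in> Q" if "U \<subseteq> E" "\<omega> U \<noteq> 0" for U using that nn[OF that(1)] by (auto simp: Q_def)
  obtain St where St: "St \<in> Q" "\<forall>T\<in>Q. card T \<le> card St" using obtain_max[OF finQ S0Q, of card] by blast
  obtain Sb where Sb: "Sb \<in> Q" "\<forall>T\<in>Q. card Sb \<le> card T" using obtain_min[OF finQ S0Q, of card] by blast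
  define Qt where "Qt = {S \<in> Q. card S = card St}"
  define Qb where "Qb = {S \<in> Q. card S = card Sb}"
  define \<omega>t where "\<omega>t = (\<lambda>U. if ws (\<lambda>_. 1) U = real (card St) then \<omega> U else 0)"
  define \<omega>b where "\<omega>b = (\<lambda>U. if ws (\<lambda>_. - 1) U = - real (card Sb) then \<omega> U else 0)"
  have rwt: "rayleigh_weight E \<omega>t" unfolding \<omega>t_def
  proof (rule initial_rw[OF rw fin])
    show "ws (\<lambda>_. 1) U \<le> real (card St)" if "U \<subseteq> E" "\<omega> U \<noteq> 0" for U
      using St(2) inQ[OF that] by (simp add: ws_one)
    show "St \<subseteq> E" "\<omega> St \<noteq> 0" "ws (\<lambda>_. 1) St = real (card St)" using St(1) by (auto simp: Q_def ws_one)
  qed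
  have rwb: "rayleigh_weight E \<omega>b" unfolding \<omega>b_def
  proof (rule initial_rw[OF rw fin])
    show "ws (\<lambda>_. - 1) U \<le> - real (card Sb)" if "U \<subseteq> E" "\<omega> U \<noteq> 0" for U
      using Sb(2) inQ[OF that] by (simp add: ws_mone)
    show "Sb \<subseteq> E" "\<omega> Sb \<noteq> 0" "ws (\<lambda>_. - 1) Sb = - real (card Sb)" using Sb(1) by (auto simp: Q_def ws_mone)
  qed
  have suppt: "{S. S \<subseteq> E \<and> \<omega>t S > 0} = Qt" by (auto simp: \<omega>t_def Qt_def Q_def ws_one)
  have suppb: "{S. S \<subseteq> E \<and> \<omega>b S > 0} = Qb" by (auto simp: \<omega>b_def Qb_def Q_def ws_mone)
  have tqt: "tq Qt" using tropq[OF rwt fin] unfolding suppt .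
  have tqb: "tq Qb" using tropq[OF rwb fin] unfolding suppb .
  have QtE: "Qt \<subseteq> Pow E" and QbE: "Qb \<subseteq> Pow E" using QE by (auto simp: Qt_def Qb_def)
  have eqt: "card X = card Y" if "X \<in> Qt" "Y \<in> Qt" for X Y using that by (auto simp: Qt_def)
  have eqb: "card X = card Y" if "X \<in> Qb" "Y \<in> Qb" for X Y using that by (auto simp: Qb_def)
  have Stt: "St \<in> Qt" and Sbb: "Sb \<in> Qb" using St Sb by (auto simp: Qt_def Qb_def)
  define M where "M = {I. \<exists>B\<in>Qt. I \<subseteq> B}"
  define N where "N = {I. \<exists>B\<in>Qb. I \<subseteq> B}"
  have exT: "\<exists>g\<in>T - S. insert g (S - {e}) \<in> Qt" if "S \<in> Qt" "T \<in> Qt" "e \<in> S - T" for S T e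
    using bx[OF tqt QtE fin eqt that(1) that(2-3)] .
  have exB: "\<exists>g\<in>T - S. insert g (S - {e}) \<in> Qb" if "S \<in> Qb" "T \<in> Qb" "e \<in> S - T" for S T e
    using bx[OF tqb QbE fin eqb that(1) that(2-3)] .
  have mt: "matroid E M" unfolding M_def by (rule matroid_of_bases(1)[OF QtE fin Stt eqt exT])
  have mb: "matroid E N" unfolding N_def by (rule matroid_of_bases(1)[OF QbE fin Sbb eqb exB])
  have bM: "bases M = Qt" unfolding M_def by (rule matroid_of_bases(2)[OF QtE fin Stt eqt exT])
  have bN: "bases N = Qb" unfolding N_def by (rule matroid_of_bases(2)[OF QbE fin Sbb eqb exB])
  have span: "spanning E N = {S. S \<subseteq> E \<and> (\<exists>B\<in>Qb. B \<subseteq> S)}" using bN by (simp add: spanning_def)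
  have QMN: "Q = M \<inter> spanning E N"
  proof
    show "Q \<subseteq> M \<inter> spanning E N"
    proof
      fix S assume S: "S \<in> Q"
      have finA: "finite {U \<in> Q. S \<subseteq> U}" using finQ by simp
      obtain S' where S': "S' \<in> {U \<in> Q. S \<subseteq> U}" "\<forall>U\<in>{U \<in> Q. S \<subseteq> U}. card U \<le> card S'"
        using obtain_max[OF finA, of S card] S by blast
      have mx': "U = S'" if "U \<in> Q" "S' \<subseteq> U" for U
      proof -
        have "card U \<le> card S'" using S' that by auto
        then show ?thesis using card_seteq[OF finQ_lem[OF that(1) QE fin] that(2)] by simp
      qed
      have "\<forall>T\<in>Q. card T \<le> card S'" using maxcard[OF tqQ QE fin _ mx'] S' by auto
      then have "card S' = card St" using St S' by (auto intro: antisym)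
      then have "S' \<in> Qt" using S' by (auto simp: Qt_def)
      then have SM: "S \<in> M" using S' by (auto simp: M_def)
      have finB: "finite {U \<in> Q. U \<subseteq> S}" using finQ by simp
      obtain S'' where S'': "S'' \<in> {U \<in> Q. U \<subseteq> S}" "\<forall>U\<in>{U \<in> Q. U \<subseteq> S}. card S'' \<le> card U"
        using obtain_min[OF finB, of S card] S by blast
      have mn'': "U = S''" if "U \<in> Q" "U \<subseteq> S''" for U
      proof -
        have "card S'' \<le> card U" using S'' that by auto
        then show ?thesis using card_seteq[OF finQ_lem[OF _ QE fin] that(2)] S'' by auto
      qed
      have "\<forall>T\<in>Q. card S'' \<le> card T" using mincard[OF tqQ QE fin _ mn''] S'' by auto
      then have "card S'' = card Sb" using Sb S'' by (auto intro: antisym)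
      then have "S'' \<in> Qb" using S'' by (auto simp: Qb_def)
      then have "S \<in> spanning E N" using S'' S QE unfolding span by auto
      then show "S \<in> M \<inter> spanning E N" using SM by simp
    qed
    show "M \<inter> spanning E N \<subseteq> Q"
    proof
      fix I assume I: "I \<in> M \<inter> spanning E N"
      then obtain B where B: "B \<in> Qt" "I \<subseteq> B" by (auto simp: M_def)
      obtain B' where B': "B' \<in> Qb" "B' \<subseteq> I" using I unfolding span by auto
      have "B \<in> Q" "B' \<in> Q" using B B' by (auto simp: Qt_def Qb_def)
      then show "I \<in> Q" using convex[OF tqQ QE fin \<open>B \<in> Q\<close> \<open>B' \<in> Q\<close> B'(2) B(2)] by simp
    qed
  qed
  have wt: "\<omega>t S = (if S \<in> bases M then \<omega> S else 0)" if "S \<subseteq> E" for S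
    using that nn[OF that] by (auto simp: bM \<omega>t_def Qt_def Q_def ws_one)
  have wb: "\<omega>b S = (if S \<in> bases N then \<omega> S else 0)" if "S \<subseteq> E" for S
    using that nn[OF that] by (auto simp: bN \<omega>b_def Qb_def Q_def ws_mone)
  show ?thesis
    unfolding Q_def[symmetric]
    apply (rule exI[of _ M], rule exI[of _ N], rule exI[of _ \<omega>t], rule exI[of _ \<omega>b])
    using mt mb QMN rwt rwb suppt suppb wt wb bM bN by simp
qed


theorem corollary4p11:
  fixes E :: "'a set" and Q :: "'a set set"
  assumes "finite E" and "Q \<subseteq> Pow E"
  shows "(rayleigh E Q \<longrightarrow>
            (\<exists>M N. matroid E M \<and> matroid E N \<and> Q = M \<inter> spanning E N \<and>
                   rayleigh E (bases M) \<and> rayleigh E (bases N)))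
       \<and> (weakly_rayleigh E Q \<longrightarrow>
            (\<exists>M N. matroid E M \<and> matroid E N \<and> Q = M \<inter> spanning E N \<and>
                   weakly_rayleigh E (bases M) \<and> weakly_rayleigh E (bases N)))"
proof (intro conjI impI)
  assume R: "rayleigh E Q"
  define \<omega> where "\<omega> = (\<lambda>S. if S \<in> Q then 1 else (0::real))"
  have rw: "rayleigh_weight E \<omega>" using R by (simp add: rayleigh_def \<omega>_def)
  have sup: "{S. S \<subseteq> E \<and> \<omega> S > 0} = Q" using assms(2) by (auto simp: \<omega>_def)
  obtain M N \<omega>t \<omega>b where H: "matroid E M" "matroid E N" "Q = M \<inter> spanning E N"
      "rayleigh_weight E \<omega>t" "rayleigh_weight E \<omega>b"
      "{S. S \<subseteq> E \<and> \<omega>t S > 0} = bases M" "{S. S \<subseteq> E \<and> \<omega>b S > 0} = bases N"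
      "\<forall>S. S \<subseteq> E \<longrightarrow> \<omega>t S = (if S \<in> bases M then \<omega> S else 0)"
      "\<forall>S. S \<subseteq> E \<longrightarrow> \<omega>b S = (if S \<in> bases N then \<omega> S else 0)"
    using core[OF assms(1) rw] unfolding sup by (elim exE conjE) blast
  have "rayleigh E (bases M)"
    unfolding rayleigh_def
  proof
    show "bases M \<subseteq> Pow E" using H(6) by auto
    show "rayleigh_weight E (\<lambda>S. if S \<in> bases M then 1 else 0)"
    proof (rule rw_cong[OF H(4)])
      fix S assume S: "S \<subseteq> E"
      show "(if S \<in> bases M then 1 else 0) = \<omega>t S"
      proof (cases "S \<in> bases M")
        case True
        then have "\<omega>t S > 0" using H(6) by blast
        then show ?thesis using H(8) S True by (auto simp: \<omega>_def split: if_splits)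
      next
        case False then show ?thesis using H(8) S by simp
      qed
    qed
  qed
  moreover have "rayleigh E (bases N)"
    unfolding rayleigh_def
  proof
    show "bases N \<subseteq> Pow E" using H(7) by auto
    show "rayleigh_weight E (\<lambda>S. if S \<in> bases N then 1 else 0)"
    proof (rule rw_cong[OF H(5)])
      fix S assume S: "S \<subseteq> E"
      show "(if S \<in> bases N then 1 else 0) = \<omega>b S"
      proof (cases "S \<in> bases N")
        case True
        then have "\<omega>b S > 0" using H(7) by blast
        then show ?thesis using H(9) S True by (auto simp: \<omega>_def split: if_splits)
      next
        case False then show ?thesis using H(9) S by simp
      qed
    qed
  qed
  ultimately show "\<exists>M N. matroid E M \<and> matroid E N \<and> Q = M \<inter> spanning E N \<and>
                   rayleigh E (bases M) \<and> rayleigh E (bases N)"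
    using H(1-3) by blast
next
  assume W: "weakly_rayleigh E Q"
  then obtain \<omega> where sup: "{S. S \<subseteq> E \<and> \<omega> S > 0} = Q" and rw: "rayleigh_weight E \<omega>"
    by (auto simp: weakly_rayleigh_def)
  obtain M N \<omega>t \<omega>b where H: "matroid E M" "matroid E N" "Q = M \<inter> spanning E N"
      "rayleigh_weight E \<omega>t" "rayleigh_weight E \<omega>b"
      "{S. S \<subseteq> E \<and> \<omega>t S > 0} = bases M" "{S. S \<subseteq> E \<and> \<omega>b S > 0} = bases N"
    using core[OF assms(1) rw] unfolding sup by (elim exE conjE) blast
  have "weakly_rayleigh E (bases M)"
    unfolding weakly_rayleigh_def using H(4,6) by blast
  moreover have "weakly_rayleigh E (bases N)"
    unfolding weakly_rayleigh_def using H(5,7) by blast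
  ultimately show "\<exists>M N. matroid E M \<and> matroid E N \<and> Q = M \<inter> spanning E N \<and>
                   weakly_rayleigh E (bases M) \<and> weakly_rayleigh E (bases N)"
    using H(1-3) by blast
qed

end
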